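(* Let $\beta\ge0.8218$ be a real number, and let $Z>0$ and $N>0$ be real numbers with $N/Z<7/3$. Then $$\beta^{-1}Z+3Z^{1/3}>\min\left\{N,\ Z\,\frac{1+0.68\,N^{-2/3}}{\beta-3(\beta/6)^{1/3}N^{-2/3}}\right\}.$$ *)

theory Defs
  imports Complex_Main
begin

end

theory Submission
  imports Defs
begin
lemma phi_pos:
  fixes m :: real
  assumes "m \<ge> 1.05" "m \<le> 1.3264"
  shows "3*1.817*0.9366^3*m^2 - 3*0.9366*m^3 - 0.68*1.817 > 0"
proof -
  have "(m - 1.05)*(1.3264 - m)*(m + 0.78) \<ge> 0" using assms by simp
  moreover have "(m - 1.05)*(1.3264 - m)*(m + 0.78) = -(m*m*m) + (2.3764 - 0.78)*(m*m) + (2.3764*0.78 - 1.05*1.3264)*m - 1.05*1.3264*0.78"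
    by algebra
  ultimately have h: "-(m*m*m) + (2.3764 - 0.78)*(m*m) + (2.3764*0.78 - 1.05*1.3264)*m - 1.05*1.3264*0.78 \<ge> 0"
    by linarith
  have m2: "m*m \<le> 1.3264*1.3264" using assms by (intro mult_mono) auto
  show ?thesis using h m2 assms by (simp add: power2_eq_square power3_eq_cube)
qed
lemma core:
  fixes b m k :: real
  assumes "b > 0" "b^3 \<ge> 0.8218" "m > 0" "b^3*m^3 \<ge> 1" "m^3 < 7/3" "k > 1.817" "k < 1.8172"
  shows "3*k*b^3*m^2 - 3*b*m^3 - 0.68*k > 0"
proof (cases "m \<le> 1.05")
  case True
  have "(b*m)^3 \<ge> 1^3" using assms by (simp add: power_mult_distrib)
  hence bm: "b*m \<ge> 1" using assms power_le_imp_le_base[of 1 2 "b*m"] by simp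
  have b0: "b \<ge> 0.9366"
  proof (rule ccontr)
    assume "\<not> ?thesis"
    hence "b^3 < 0.9366^3" using assms by (intro power_strict_mono) auto
    thus False using assms by (simp add: power_divide)
  qed
  have bb: "b^2 \<ge> 0.9366^2" using b0 by (intro power_mono) auto
  have f2: "3*k*b^2 - 3*m \<ge> 0"
  proof -
    have "k*b^2 \<ge> 1.817*0.9366^2" using bb assms by (intro mult_mono) auto
    thus ?thesis using True by (simp add: power_divide)
  qed
  have "3*k*b^3*m^2 - 3*b*m^3 = (b*m)*(m*(3*k*b^2 - 3*m))"
    by (simp add: algebra_simps power2_eq_square power3_eq_cube)
  also have "\<dots> \<ge> 1*(m*(3*k*b^2 - 3*m))"
    using bm f2 assms by (intro mult_right_mono) auto
  finally have s1: "3*k*b^3*m^2 - 3*b*m^3 \<ge> m*(3*k*b^2 - 3*m)" by simp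
  have "m*(3*k*b^2 - 3*m) = 3*k*b*(b*m) - 3*m^2" by (simp add: algebra_simps power2_eq_square)
  also have "\<dots> \<ge> 3*k*b*1 - 3*m^2" using bm assms by (intro diff_right_mono mult_left_mono) auto
  finally have s2: "m*(3*k*b^2 - 3*m) \<ge> 3*k*b - 3*m^2" by simp
  have kb: "k*b \<ge> 1.817*0.9366" using b0 assms by (intro mult_mono) auto
  have "m^2 \<le> 1.05^2" using True assms by (intro power_mono) auto
  hence m2: "m^2 \<le> 1.1025" by (simp add: power_divide)
  have t1: "3*k*b \<ge> 5.1" using kb by (simp add: mult.commute)
  have t2: "3*m^2 \<le> 3.31" using m2 by simp
  have t3: "0.68*k \<le> 1.24" using assms by simp
  show ?thesis using s1 s2 t1 t2 t3 by (simp only: power2_eq_square[of 10])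
next
  case False
  have m3: "m \<le> 1.3264"
  proof (rule ccontr)
    assume "\<not> ?thesis"
    hence "m^3 > 1.3264^3" by (intro power_strict_mono) auto
    thus False using assms by (simp add: power_divide)
  qed
  define b0 :: real where "b0 = 0.9366"
  have b0: "b \<ge> b0" unfolding b0_def
  proof (rule ccontr)
    assume "\<not> b \<ge> 0.9366"
    hence "b^3 < 0.9366^3" using assms by (intro power_strict_mono) auto
    thus False using assms by (simp add: power_divide)
  qed
  have q: "k*(b^2+b*b0+b0^2) \<ge> m"
  proof -
    have "b^2 \<ge> b0^2" "b*b0 \<ge> b0*b0" using b0 by (auto intro: power_mono mult_right_mono simp: b0_def)
    hence "b^2+b*b0+b0^2 \<ge> 3*b0^2" by (simp add: power2_eq_square)
    hence "k*(b^2+b*b0+b0^2) \<ge> 1.817*(3*b0^2)" using assms by (intro mult_mono) (auto simp: b0_def)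
    thus ?thesis using m3 by (simp add: b0_def power_divide)
  qed
  have "(b-b0)*(3*m^2*(k*(b^2+b*b0+b0^2) - m)) \<ge> 0" using q b0 by simp
  hence st1: "3*k*b^3*m^2 - 3*b*m^3 \<ge> 3*k*b0^3*m^2 - 3*b0*m^3"
    by (simp add: algebra_simps power2_eq_square power3_eq_cube)
  have "3*b0^3*m^2 - 0.68 \<ge> 0"
  proof -
    have "m^2 \<ge> 1" using False by simp
    thus ?thesis unfolding b0_def by (simp add: power_divide)
  qed
  hence st2: "k*(3*b0^3*m^2 - 0.68) \<ge> 1.817*(3*b0^3*m^2 - 0.68)" using assms by (intro mult_right_mono) auto
  have "3*1.817*0.9366^3*m^2 - 3*0.9366*m^3 - 0.68*1.817 > 0" using phi_pos False m3 by simp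
  thus ?thesis using st1 st2 unfolding b0_def by (simp add: algebra_simps)
qed
lemma main_alg:
  fixes a n b k :: real
  assumes a: "a > 0" and n: "n > 0" and b: "b > 0" and k1: "k > 1.817" and k2: "k < 1.8172"
    and bb: "b^3 \<ge> 0.8218" and LN: "a^3/b^3 + 3*a \<le> n^3" and r: "n^3/a^3 < 7/3"
  shows "a^3/b^3 + 3*a > min (n^3) (a^3*(1 + 0.68*(1/n^2)) / (b^3 - 3*(b/k)*(1/n^2)))"
proof -
  define t where "t = 1/n^2"
  define c where "c = 3*b/k"
  define w where "w = 1/b^3 + 3/a^2"
  define m where "m = n/a"
  define D where "D = b^3 - 3*(b/k)*(1/n^2)"
  let ?L = "a^3/b^3 + 3*a"
  have Lpos: "?L > 0" using a b by (simp add: add_pos_pos)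
  have tpos: "t > 0" using n by (simp add: t_def)
  have kpos: "k > 0" using k1 by simp
  show ?thesis
  proof (cases "D \<le> 0")
    case True
    have "a^3*(1 + 0.68*(1/n^2)) \<ge> 0" using a n by simp
    hence "a^3*(1 + 0.68*(1/n^2)) / D \<le> 0" using True by (simp add: divide_nonneg_nonpos)
    thus ?thesis using Lpos unfolding D_def by linarith
  next
    case False
    hence Dp: "D > 0" by simp
    have m0: "m > 0" using a n by (simp add: m_def)
    have mr: "m^3 < 7/3" using r by (simp add: m_def power_divide)
    have Lw: "?L = a^3*w"
    proof -
      have "a^3*(3/a^2) = 3*a" using a by (simp add: power2_eq_square power3_eq_cube)
      thus ?thesis by (simp add: w_def distrib_left)
    qed
    have wm: "w \<le> m^3"
    proof -
      have "a^3*w \<le> n^3" using LN Lw by simp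
      hence "w \<le> n^3/a^3" using a by (simp add: pos_le_divide_eq mult.commute)
      thus ?thesis by (simp add: m_def power_divide)
    qed
    have bm: "b^3*m^3 \<ge> 1"
    proof -
      have "1/b^3 \<le> w" using a by (simp add: w_def)
      hence "1/b^3 \<le> m^3" using wm by simp
      thus ?thesis using b by (simp add: pos_divide_le_eq mult.commute)
    qed
    have cr: "3*k*b^3*m^2 - 3*b*m^3 - 0.68*k > 0" using core[OF b bb m0 bm mr k1 k2] .
    have cr2: "3*b^3*m^2 - c*m^3 - 0.68 > 0"
    proof -
      have kc: "k*c = 3*b" using kpos by (simp add: c_def)
      have "k*(3*b^3*m^2 - c*m^3 - 0.68) = 3*k*b^3*m^2 - (k*c)*m^3 - 0.68*k"
        by (simp add: algebra_simps)
      hence "k*(3*b^3*m^2 - c*m^3 - 0.68) > 0" using cr kc by simp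
      thus ?thesis using kpos by (simp add: zero_less_mult_iff)
    qed
    have cpos: "c \<ge> 0" using b kpos by (simp add: c_def)
    have "w*c \<le> c*m^3" using mult_right_mono[OF wm cpos] by (simp add: mult.commute)
    hence cr3: "3*b^3*m^2 - w*c - 0.68 > 0" using cr2 by linarith
    have e2: "w*b^3 = 1 + 3*b^3/a^2" using b by (simp add: w_def distrib_right)
    have e3: "D = b^3 - c*t" by (simp add: D_def c_def t_def)
    have e4: "t*m^2 = 1/a^2" using a n by (simp add: t_def m_def power_divide)
    have "3*b^3/a^2 = t*(3*b^3*m^2)"
    proof -
      have "t*(3*b^3*m^2) = 3*b^3*(t*m^2)" by (simp add: algebra_simps)
      thus ?thesis using e4 by simp
    qed
    moreover have "t*(3*b^3*m^2 - w*c - 0.68) = t*(3*b^3*m^2) - w*c*t - 0.68*t" by (simp add: algebra_simps)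
    ultimately have e5: "w*b^3 - w*c*t - 1 - 0.68*t = t*(3*b^3*m^2 - w*c - 0.68)" using e2 by linarith
    have "?L*D - a^3*(1+0.68*t) = a^3*(w*b^3 - w*c*t - 1 - 0.68*t)" unfolding Lw e3 by (simp add: algebra_simps)
    hence eq: "?L*D - a^3*(1+0.68*t) = a^3*t*(3*b^3*m^2 - w*c - 0.68)" using e5 by simp
    have "a^3*t*(3*b^3*m^2 - w*c - 0.68) > 0" using a tpos cr3 by simp
    hence "a^3*(1+0.68*t) < ?L*D" using eq by linarith
    hence "a^3*(1+0.68*t)/D < ?L" using Dp by (simp add: divide_less_eq)
    thus ?thesis unfolding D_def t_def by linarith
  qed
qed
lemma cube_root_cube: "x > 0 \<Longrightarrow> (x powr (1/3::real))^3 = (x::real)"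
proof -
  assume x: "x > 0"
  have "(x powr (1/3::real))^3 = x powr (real 3 * (1/3))" using x by (intro powr_power) simp
  thus ?thesis using x by (simp only: of_nat_numeral) simp
qed
lemma neg23: "x > 0 \<Longrightarrow> (x::real) powr (-(2/3)) = 1/(x powr (1/3))^2"
proof -
  assume x: "x > 0"
  have h: "(x powr (1/3::real))^2 = x powr (real 2 * (1/3))" using x by (intro powr_power) simp
  have e: "real 2 * (1/3) = (2/3::real)" by simp
  show ?thesis unfolding h e powr_minus by (simp only: divide_inverse mult_1)
qed

theorem lemma5:
  fixes \<beta> Z N :: real
  assumes "\<beta> \<ge> 0.8218" and "Z > 0" and "N > 0" and "N / Z < 7 / 3"
  shows "Z / \<beta> + 3 * Z powr (1/3) >
    min N (Z * (1 + 0.68 * N powr (-(2/3))) / (\<beta> - 3 * (\<beta> / 6) powr (1/3) * N powr (-(2/3))))"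
proof -
  define a where "a = Z powr (1/3)"
  define n where "n = N powr (1/3)"
  define b where "b = \<beta> powr (1/3)"
  define k where "k = (6::real) powr (1/3)"
  have bpos: "\<beta> > 0" using assms(1) by simp
  have Za: "Z = a^3" using assms(2) by (simp add: a_def cube_root_cube)
  have Nn: "N = n^3" using assms(3) by (simp add: n_def cube_root_cube)
  have Bb: "\<beta> = b^3" using bpos by (simp add: b_def cube_root_cube)
  have k3: "k^3 = 6" by (simp add: k_def cube_root_cube)
  have kpos: "k > 0" by (simp add: k_def)
  have k1: "k > 1.817"
  proof (rule ccontr)
    assume a: "\<not> k > 1.817"
    hence "k*k \<le> 1.817*1.817" using kpos by (intro mult_mono) auto
    hence "k*k*k \<le> (1.817*1.817)*1.817" using a kpos by (intro mult_mono) auto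
    moreover have "k*k*k = 6" using k3 by (simp add: power3_eq_cube)
    ultimately show False by simp
  qed
  have k2: "k < 1.8172"
  proof (rule ccontr)
    assume a: "\<not> k < 1.8172"
    hence "1.8172*1.8172 \<le> k*k" using kpos by (intro mult_mono) auto
    hence "(1.8172*1.8172)*1.8172 \<le> k*k*k" using a kpos by (intro mult_mono) auto
    moreover have "k*k*k = 6" using k3 by (simp add: power3_eq_cube)
    ultimately show False by simp
  qed
  have a0: "a > 0" using assms(2) by (simp add: a_def)
  have n0: "n > 0" using assms(3) by (simp add: n_def)
  have b0: "b > 0" using bpos by (simp add: b_def)
  have Nm: "N powr (-(2/3)) = 1/n^2" using assms(3) by (simp add: n_def neg23)
  have B6: "(\<beta>/6) powr (1/3) = b/k" using bpos by (simp add: b_def k_def powr_divide)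
  have Za1: "Z powr (1/3) = a" by (simp add: a_def)
  show ?thesis
  proof (cases "a^3/b^3 + 3*a \<le> n^3")
    case True
    have r: "n^3/a^3 < 7/3" using assms(4) Za Nn by simp
    have "a^3/b^3 + 3*a > min (n^3) (a^3*(1 + 0.68*(1/n^2)) / (b^3 - 3*(b/k)*(1/n^2)))"
      using main_alg[OF a0 n0 b0 k1 k2 _ True r] assms(1) Bb by simp
    moreover have "Z / \<beta> + 3 * Z powr (1/3) = a^3/b^3 + 3*a" unfolding Za1 by (simp only: Za Bb)
    moreover have "min N (Z * (1 + 0.68 * N powr (-(2/3))) / (\<beta> - 3 * (\<beta> / 6) powr (1/3) * N powr (-(2/3))))
       = min (n^3) (a^3*(1 + 0.68*(1/n^2)) / (b^3 - 3*(b/k)*(1/n^2)))"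
      unfolding Nm B6 by (simp only: Za Nn Bb)
    ultimately show ?thesis by simp
  next
    case False
    moreover have "Z / \<beta> + 3 * Z powr (1/3) = a^3/b^3 + 3*a" unfolding Za1 by (simp only: Za Bb)
    ultimately have "Z / \<beta> + 3 * Z powr (1/3) > N" using Nn by simp
    thus ?thesis by linarith
  qed
qed
end
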